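(* Assume the density matrices $\rho_1,\dots,\rho_n$ are linearly independent over $\mathbb{R}$, i.e. there is no nonzero $c\in\mathbb{R}^n$ with $\sum_xc_x\rho_x=0$. Then for every $\lambda\ge0$ the function $p\mapsto\chi(p)-\lambda s^Tp$ is strictly concave on $\Delta_n$, and hence has a unique maximizer $p^*$ on $\Delta_n$ (in particular, for $\lambda=0$, the Holevo quantity $\chi$ has a unique maximizer on $\Delta_n$).
   Context: Density matrices $\rho_1,\dots,\rho_n\in\mathcal{D}^m$ ($m\times m$ complex positive semidefinite, trace one); $\Delta_n$ the probability simplex in $\mathbb{R}^n$; $s\in\mathbb{R}^n$, $s\ge0$. For $p\in\Delta_n$, $\rho_p=\sum_xp_x\rho_x$, $H(\rho)=-\operatorname{Tr}[\rho\ln\rho]$ (convention $0\ln0=0$), $\chi(p)=H(\rho_p)-\sum_xp_xH(\rho_x)$. *)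

theory Defs
  imports Jordan_Normal_Form.Char_Poly Jordan_Normal_Form.Schur_Decomposition
begin

definition density :: "nat \<Rightarrow> complex mat \<Rightarrow> bool" where
  "density m A \<longleftrightarrow> A \<in> carrier_mat m m \<and> mat_adjoint A = A \<and>
     (\<forall>v \<in> carrier_vec m. 0 \<le> Re (conjugate v \<bullet> (A *\<^sub>v v))) \<and> (\<Sum>i<m. A $$ (i,i)) = 1"

(* von Neumann entropy  H(A) = - Tr[A ln A] = - sum over eigenvalues (with multiplicity)
   of lambda * ln lambda; the term for lambda = 0 is 0 (convention 0 ln 0 = 0, automatic
   here since 0 * _ = 0) *)
definition vn_entropy :: "complex mat \<Rightarrow> real" where
  "vn_entropy A = - (\<Sum>l\<in>#proots (char_poly A). Re l * ln (Re l))"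

definition mix :: "nat \<Rightarrow> ('n::finite \<Rightarrow> complex mat) \<Rightarrow> ('n \<Rightarrow> real) \<Rightarrow> complex mat" where
  "mix m \<rho> p = mat m m (\<lambda>(i,j). \<Sum>x\<in>UNIV. complex_of_real (p x) * (\<rho> x $$ (i,j)))"

definition holevo :: "nat \<Rightarrow> ('n::finite \<Rightarrow> complex mat) \<Rightarrow> ('n \<Rightarrow> real) \<Rightarrow> real" where
  "holevo m \<rho> p = vn_entropy (mix m \<rho> p) - (\<Sum>x\<in>UNIV. p x * vn_entropy (\<rho> x))"

definition simplex :: "('n::finite \<Rightarrow> real) set" where
  "simplex = {p. (\<forall>x. 0 \<le> p x) \<and> (\<Sum>x\<in>UNIV. p x) = 1}"

definition strict_concave_on :: "('n \<Rightarrow> real) set \<Rightarrow> (('n \<Rightarrow> real) \<Rightarrow> real) \<Rightarrow> bool" where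
  "strict_concave_on S f \<longleftrightarrow> (\<forall>p\<in>S. \<forall>q\<in>S. p \<noteq> q \<longrightarrow> (\<forall>t::real. 0 < t \<and> t < 1 \<longrightarrow>
      t * f p + (1 - t) * f q < f (\<lambda>x. t * p x + (1 - t) * q x)))"

end

theory Submission
  imports Defs
begin

definition eta :: "real \<Rightarrow> real" where "eta x = - (x * ln x)"

lemma ln_strict: fixes y :: real assumes "0 < y" "y \<noteq> 1" shows "ln y < y - 1"
proof -
  have s: "sqrt y > 0" using assms by simp
  have s1: "sqrt y \<noteq> 1" using assms by auto
  have "ln y = 2 * ln (sqrt y)"
    using assms by (simp add: ln_sqrt)
  also have "\<dots> \<le> 2 * (sqrt y - 1)" using ln_le_minus_one[OF s] by simp
  also have "\<dots> < y - 1"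
  proof -
    have "(sqrt y - 1)^2 > 0" using s1 by simp
    hence "(sqrt y)^2 - 2 * sqrt y + 1 > 0" by (simp add: power2_eq_square algebra_simps)
    thus ?thesis using assms by simp
  qed
  finally show ?thesis .
qed

lemma eta_tangent:
  assumes x: "0 \<le> x" and mu: "0 < mu"
  shows "eta x \<le> eta mu - (1 + ln mu) * (x - mu)"
    and "x \<noteq> mu \<Longrightarrow> eta x < eta mu - (1 + ln mu) * (x - mu)"
proof -
  have key: "eta mu - (1 + ln mu) * (x - mu) - eta x = x * ln x - x * ln mu - x + mu"
    unfolding eta_def by (simp add: algebra_simps)
  have ge: "x * ln x - x * ln mu - x + mu \<ge> 0"
    and gt: "x \<noteq> mu \<Longrightarrow> x * ln x - x * ln mu - x + mu > 0"
  proof -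
    show "x * ln x - x * ln mu - x + mu \<ge> 0"
    proof (cases "x = 0")
      case True then show ?thesis using mu by simp
    next
      case False
      hence xp: "x > 0" using x by simp
      have "ln (mu / x) \<le> mu / x - 1" using ln_le_minus_one[of "mu/x"] xp mu by simp
      hence "x * ln (mu / x) \<le> x * (mu / x - 1)" using xp by (simp add: mult_left_mono)
      hence "x * (ln mu - ln x) \<le> mu - x" using xp mu by (simp add: ln_div algebra_simps)
      thus ?thesis by (simp add: algebra_simps)
    qed
    assume ne: "x \<noteq> mu"
    show "x * ln x - x * ln mu - x + mu > 0"
    proof (cases "x = 0")
      case True then show ?thesis using mu by simp
    next
      case False
      hence xp: "x > 0" using x by simp
      have "mu / x \<noteq> 1" using ne xp by auto
      hence "ln (mu / x) < mu / x - 1" using ln_strict[of "mu/x"] xp mu by simp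
      hence "x * ln (mu / x) < x * (mu / x - 1)" using xp by (simp add: mult_strict_left_mono)
      hence "x * (ln mu - ln x) < mu - x" using xp mu by (simp add: ln_div algebra_simps)
      thus ?thesis by (simp add: algebra_simps)
    qed
  qed
  show "eta x \<le> eta mu - (1 + ln mu) * (x - mu)" using key ge by linarith
  assume "x \<noteq> mu" then show "eta x < eta mu - (1 + ln mu) * (x - mu)" using key gt by linarith
qed

lemma eta_jensen:
  fixes w a :: "'j \<Rightarrow> real"
  assumes fin: "finite J" and w0: "\<And>j. j \<in> J \<Longrightarrow> 0 \<le> w j" and w1: "(\<Sum>j\<in>J. w j) = 1"
    and a0: "\<And>j. j \<in> J \<Longrightarrow> 0 \<le> a j"
  shows "(\<Sum>j\<in>J. w j * eta (a j)) \<le> eta (\<Sum>j\<in>J. w j * a j)"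
    and "(\<Sum>j\<in>J. w j * eta (a j)) = eta (\<Sum>j\<in>J. w j * a j) \<Longrightarrow>
          \<forall>j\<in>J. w j \<noteq> 0 \<longrightarrow> a j = (\<Sum>j\<in>J. w j * a j)"
proof -
  define mu where "mu = (\<Sum>j\<in>J. w j * a j)"
  have mu0: "mu \<ge> 0" unfolding mu_def using w0 a0 by (simp add: sum_nonneg)
  have "(\<Sum>j\<in>J. w j * eta (a j)) \<le> eta mu \<and>
        ((\<Sum>j\<in>J. w j * eta (a j)) = eta mu \<longrightarrow> (\<forall>j\<in>J. w j \<noteq> 0 \<longrightarrow> a j = mu))"
  proof (cases "mu = 0")
    case True
    have z: "\<forall>j\<in>J. w j * a j = 0"
      using True unfolding mu_def using sum_nonneg_eq_0_iff[OF fin, of "\<lambda>j. w j * a j"] w0 a0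
      by (simp add: mult_nonneg_nonneg)
    hence "\<forall>j\<in>J. w j \<noteq> 0 \<longrightarrow> a j = 0" by auto
    moreover have "(\<Sum>j\<in>J. w j * eta (a j)) = 0"
      by (rule sum.neutral) (use z in \<open>auto simp: eta_def\<close>)
    ultimately show ?thesis using True by (simp add: eta_def)
  next
    case False
    hence mup: "mu > 0" using mu0 by simp
    have le: "\<And>j. j \<in> J \<Longrightarrow> w j * eta (a j) \<le> w j * (eta mu - (1 + ln mu) * (a j - mu))"
      using eta_tangent(1)[OF a0 mup] w0 by (simp add: mult_left_mono)
    have "(\<Sum>j\<in>J. w j * (eta mu - (1 + ln mu) * (a j - mu))) =
          eta mu * (\<Sum>j\<in>J. w j) - (1 + ln mu) * ((\<Sum>j\<in>J. w j * a j) - mu * (\<Sum>j\<in>J. w j))"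
      by (simp add: algebra_simps sum_subtractf sum_distrib_left sum_distrib_right)
    also have "\<dots> = eta mu" using w1 unfolding mu_def by simp
    finally have sumeq: "(\<Sum>j\<in>J. w j * (eta mu - (1 + ln mu) * (a j - mu))) = eta mu" .
    have A: "(\<Sum>j\<in>J. w j * eta (a j)) \<le> eta mu"
      using sum_mono[of J "\<lambda>j. w j * eta (a j)", OF le] sumeq by simp
    have B: "\<forall>j\<in>J. w j \<noteq> 0 \<longrightarrow> a j = mu" if eq: "(\<Sum>j\<in>J. w j * eta (a j)) = eta mu"
    proof (rule ccontr)
      assume "\<not> (\<forall>j\<in>J. w j \<noteq> 0 \<longrightarrow> a j = mu)"
      then obtain k where k: "k \<in> J" "w k \<noteq> 0" "a k \<noteq> mu" by auto
      have wk: "w k > 0" using w0[OF k(1)] k(2) by simp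
      have "w k * eta (a k) < w k * (eta mu - (1 + ln mu) * (a k - mu))"
        using eta_tangent(2)[OF a0[OF k(1)] mup k(3)] wk by (rule mult_strict_left_mono)
      hence "(\<Sum>j\<in>J. w j * eta (a j)) < (\<Sum>j\<in>J. w j * (eta mu - (1 + ln mu) * (a j - mu)))"
        by (intro sum_strict_mono_ex1[OF fin]) (use le k(1) in auto)
      thus False using eq sumeq by simp
    qed
    show ?thesis using A B by blast
  qed
  thus "(\<Sum>j\<in>J. w j * eta (a j)) \<le> eta (\<Sum>j\<in>J. w j * a j)"
    and "(\<Sum>j\<in>J. w j * eta (a j)) = eta (\<Sum>j\<in>J. w j * a j) \<Longrightarrow>
          \<forall>j\<in>J. w j \<noteq> 0 \<longrightarrow> a j = (\<Sum>j\<in>J. w j * a j)"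
    unfolding mu_def[symmetric] by blast+
qed

lemma eta_le_one: "0 \<le> x \<Longrightarrow> eta x \<le> 1"
proof (cases "x = 0")
  case True then show ?thesis by (simp add: eta_def)
next
  case False
  assume "0 \<le> x" hence xp: "x > 0" using False by simp
  have "ln (1/x) \<le> 1/x - 1" using ln_le_minus_one[of "1/x"] xp by simp
  hence "- ln x \<le> 1/x - 1" using xp by (simp add: ln_div)
  hence "x * (- ln x) \<le> x * (1/x - 1)" using xp by (intro mult_left_mono) auto
  also have "x * (1/x - 1) = 1 - x" using xp by (simp add: field_simps)
  finally show ?thesis using xp by (simp add: eta_def)
qed

definition ip :: "nat \<Rightarrow> (nat \<Rightarrow> complex) \<Rightarrow> (nat \<Rightarrow> complex) \<Rightarrow> complex" where
  "ip n f g = (\<Sum>i<n. cnj (f i) * g i)"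
definition mv :: "nat \<Rightarrow> complex mat \<Rightarrow> (nat \<Rightarrow> complex) \<Rightarrow> (nat \<Rightarrow> complex)" where
  "mv n A f = (\<lambda>i. \<Sum>j<n. A $$ (i,j) * f j)"
definition herm :: "nat \<Rightarrow> complex mat \<Rightarrow> bool" where
  "herm n A \<longleftrightarrow> (\<forall>i<n. \<forall>j<n. A $$ (i,j) = cnj (A $$ (j,i)))"
definition orthonormal :: "nat \<Rightarrow> (nat \<Rightarrow> nat \<Rightarrow> complex) \<Rightarrow> bool" where
  "orthonormal n u \<longleftrightarrow> (\<forall>k<n. \<forall>l<n. ip n (u k) (u l) = (if k = l then 1 else 0))"
definition eigsys :: "nat \<Rightarrow> complex mat \<Rightarrow> (nat \<Rightarrow> nat \<Rightarrow> complex) \<Rightarrow> (nat \<Rightarrow> real) \<Rightarrow> bool" where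
  "eigsys n A u d \<longleftrightarrow> orthonormal n u \<and> (\<forall>k<n. \<forall>i<n. mv n A (u k) i = of_real (d k) * u k i)"

lemma ip_cnj: "cnj (ip n f g) = ip n g f"
  unfolding ip_def by (simp add: mult.commute)

lemma ip_sum_right: "ip n f (\<lambda>i. \<Sum>l\<in>L. c l * g l i) = (\<Sum>l\<in>L. c l * ip n f (g l))"
proof -
  have "ip n f (\<lambda>i. \<Sum>l\<in>L. c l * g l i) = (\<Sum>i<n. \<Sum>l\<in>L. c l * (cnj (f i) * g l i))"
    unfolding ip_def by (simp add: sum_distrib_left mult.left_commute)
  also have "\<dots> = (\<Sum>l\<in>L. \<Sum>i<n. c l * (cnj (f i) * g l i))" by (rule sum.swap)
  also have "\<dots> = (\<Sum>l\<in>L. c l * ip n f (g l))" unfolding ip_def by (simp add: sum_distrib_left)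
  finally show ?thesis .
qed

lemma ip_sum_left: "ip n (\<lambda>i. \<Sum>l\<in>L. c l * g l i) f = (\<Sum>l\<in>L. cnj (c l) * ip n (g l) f)"
proof -
  have "ip n (\<lambda>i. \<Sum>l\<in>L. c l * g l i) f = cnj (ip n f (\<lambda>i. \<Sum>l\<in>L. c l * g l i))"
    by (simp add: ip_cnj)
  also have "\<dots> = (\<Sum>l\<in>L. cnj (c l) * ip n (g l) f)"
    by (simp add: ip_sum_right ip_cnj)
  finally show ?thesis .
qed

lemma ip_scale_right: "ip n f (\<lambda>i. c * g i) = c * ip n f g"
  unfolding ip_def by (simp add: sum_distrib_left algebra_simps)

lemma ip_scale_left: "ip n (\<lambda>i. c * g i) f = cnj c * ip n g f"
  unfolding ip_def by (simp add: sum_distrib_left algebra_simps)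

lemma ip_cong: "(\<And>i. i < n \<Longrightarrow> f i = f' i) \<Longrightarrow> (\<And>i. i < n \<Longrightarrow> g i = g' i) \<Longrightarrow> ip n f g = ip n f' g'"
  unfolding ip_def by (intro sum.cong) auto

lemma mv_cong: "(\<And>i. i < n \<Longrightarrow> f i = f' i) \<Longrightarrow> mv n A f i = mv n A f' i"
  unfolding mv_def by (intro sum.cong) auto

lemma mv_sum: "mv n A (\<lambda>i. \<Sum>l\<in>L. c l * g l i) j = (\<Sum>l\<in>L. c l * mv n A (g l) j)"
proof -
  have "mv n A (\<lambda>i. \<Sum>l\<in>L. c l * g l i) j = (\<Sum>i<n. \<Sum>l\<in>L. c l * (A $$ (j,i) * g l i))"
    unfolding mv_def by (simp add: sum_distrib_left mult.left_commute)
  also have "\<dots> = (\<Sum>l\<in>L. \<Sum>i<n. c l * (A $$ (j,i) * g l i))" by (rule sum.swap)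
  also have "\<dots> = (\<Sum>l\<in>L. c l * mv n A (g l) j)" unfolding mv_def by (simp add: sum_distrib_left)
  finally show ?thesis .
qed

lemma mv_scale: "mv n A (\<lambda>i. c * g i) j = c * mv n A g j"
  unfolding mv_def by (simp add: sum_distrib_left algebra_simps)

lemma herm_swap:
  assumes h: "herm n A"
  shows "ip n f (mv n A g) = ip n (mv n A f) g"
proof -
  have "ip n f (mv n A g) = (\<Sum>i<n. \<Sum>j<n. cnj (f i) * A $$ (i,j) * g j)"
    unfolding ip_def mv_def by (simp add: sum_distrib_left algebra_simps)
  also have "\<dots> = (\<Sum>j<n. \<Sum>i<n. cnj (f i) * A $$ (i,j) * g j)"
    by (rule sum.swap)
  also have "\<dots> = (\<Sum>j<n. \<Sum>i<n. cnj (A $$ (j,i) * f i) * g j)"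
  proof (intro sum.cong refl)
    fix i j assume i: "i \<in> {..<n}" and j: "j \<in> {..<n}"
    have "A $$ (j,i) = cnj (A $$ (i,j))" using h i j unfolding herm_def by blast
    hence "cnj (A $$ (j,i)) = A $$ (i,j)" by simp
    thus "cnj (f i) * A $$ (i,j) * g j = cnj (A $$ (j,i) * f i) * g j" by simp
  qed
  also have "\<dots> = ip n (mv n A f) g"
    unfolding ip_def mv_def by (simp add: sum_distrib_right)
  finally show ?thesis .
qed

lemma cnj_mult_self: "cnj z * z = complex_of_real ((cmod z)^2)"
  by (metis complex_norm_square mult.commute)

lemma ip_self_real: "ip n f f = of_real (\<Sum>i<n. (cmod (f i))^2)"
  unfolding ip_def of_real_sum by (intro sum.cong refl) (rule cnj_mult_self)

lemma orth_complete:
  assumes o: "orthonormal n u" and i: "i < n" and j: "j < n"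
  shows "(\<Sum>k<n. u k i * cnj (u k j)) = (if i = j then 1 else 0)"
proof -
  define W where "W = mat n n (\<lambda>(i,k). u k i)"
  define W' where "W' = mat n n (\<lambda>(k,i). cnj (u k i))"
  have W: "W \<in> carrier_mat n n" and W': "W' \<in> carrier_mat n n" unfolding W_def W'_def by auto
  have "W' * W = 1\<^sub>m n"
  proof (rule eq_matI)
    fix k l assume k: "k < dim_row (1\<^sub>m n :: complex mat)" and l: "l < dim_col (1\<^sub>m n :: complex mat)"
    have "(W' * W) $$ (k,l) = row W' k \<bullet> col W l" using k l W W' by (simp add: index_mult_mat)
    also have "\<dots> = ip n (u k) (u l)" using k l unfolding W_def W'_def ip_def scalar_prod_def
      by (simp add: lessThan_atLeast0)
    also have "\<dots> = 1\<^sub>m n $$ (k,l)" using o k l unfolding orthonormal_def by simp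
    finally show "(W' * W) $$ (k,l) = 1\<^sub>m n $$ (k,l)" .
  qed (use W W' in auto)
  hence WW: "W * W' = 1\<^sub>m n" using mat_mult_left_right_inverse[OF W' W] by simp
  have "(W * W') $$ (i,j) = row W i \<bullet> col W' j" using i j W W' by (simp add: index_mult_mat)
  also have "\<dots> = (\<Sum>k<n. u k i * cnj (u k j))" using i j unfolding W_def W'_def scalar_prod_def
    by (simp add: lessThan_atLeast0)
  finally show ?thesis using WW i j by simp
qed

lemma orth_expand:
  assumes o: "orthonormal n u" and i: "i < n"
  shows "f i = (\<Sum>k<n. ip n (u k) f * u k i)"
proof -
  have "(\<Sum>k<n. ip n (u k) f * u k i) = (\<Sum>k<n. \<Sum>j<n. u k i * cnj (u k j) * f j)"
    unfolding ip_def by (simp add: sum_distrib_left sum_distrib_right algebra_simps)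
  also have "\<dots> = (\<Sum>j<n. (\<Sum>k<n. u k i * cnj (u k j)) * f j)"
    by (subst sum.swap) (simp add: sum_distrib_right)
  also have "\<dots> = (\<Sum>j<n. (if i = j then f j else 0))"
    using orth_complete[OF o i] by (intro sum.cong refl) simp
  also have "\<dots> = f i" using i by simp
  finally show ?thesis by simp
qed

lemma parseval:
  assumes o: "orthonormal n u"
  shows "ip n f f = (\<Sum>k<n. ip n (u k) f * cnj (ip n (u k) f))"
proof -
  have "ip n f f = ip n f (\<lambda>i. \<Sum>k<n. ip n (u k) f * u k i)"
    by (rule ip_cong) (use orth_expand[OF o] in auto)
  also have "\<dots> = (\<Sum>k<n. ip n (u k) f * ip n f (u k))" by (simp add: ip_sum_right)
  also have "\<dots> = (\<Sum>k<n. ip n (u k) f * cnj (ip n (u k) f))" by (simp add: ip_cnj)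
  finally show ?thesis .
qed

lemma parseval_real:
  assumes o: "orthonormal n u"
  shows "Re (ip n f f) = (\<Sum>k<n. (cmod (ip n (u k) f))^2)"
proof -
  have "ip n f f = (\<Sum>k<n. of_real ((cmod (ip n (u k) f))^2))"
    unfolding parseval[OF o] by (intro sum.cong refl) (metis complex_norm_square)
  thus ?thesis by (simp only: Re_sum) simp
qed

lemma mat_reconstruct:
  assumes o: "orthonormal n u" and i: "i < n" and j: "j < n"
  shows "A $$ (i,j) = (\<Sum>k<n. mv n A (u k) i * cnj (u k j))"
proof -
  have "(\<Sum>k<n. mv n A (u k) i * cnj (u k j)) = (\<Sum>k<n. \<Sum>l<n. A $$ (i,l) * (u k l * cnj (u k j)))"
    unfolding mv_def by (intro sum.cong refl) (simp add: sum_distrib_right mult.assoc)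
  also have "\<dots> = (\<Sum>l<n. A $$ (i,l) * (\<Sum>k<n. u k l * cnj (u k j)))"
    by (subst sum.swap) (simp add: sum_distrib_left)
  also have "\<dots> = (\<Sum>l<n. (if l = j then A $$ (i,l) else 0))"
    using orth_complete[OF o _ j] by (intro sum.cong refl) simp
  also have "\<dots> = A $$ (i,j)" using j by simp
  finally show ?thesis by simp
qed

lemma cscalar_eq:
  fixes x y :: "complex vec"
  assumes "x \<in> carrier_vec N" "y \<in> carrier_vec N"
  shows "x \<bullet>c y = (\<Sum>i<N. x $ i * cnj (y $ i))"
  using assms unfolding scalar_prod_def by (simp add: lessThan_atLeast0)

lemma normalize_orth:
  fixes g :: "nat \<Rightarrow> nat \<Rightarrow> complex"
  assumes og: "\<forall>k<N. \<forall>l<N. (ip N (g k) (g l) = 0) = (k \<noteq> l)"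
  defines "w \<equiv> \<lambda>k i. inverse (complex_of_real (sqrt (Re (ip N (g k) (g k))))) * g k i"
  shows "orthonormal N w"
  unfolding orthonormal_def
proof (intro allI impI)
  fix k l assume k: "k < N" and l: "l < N"
  define r where "r = (\<lambda>k. sqrt (Re (ip N (g k) (g k))))"
  have wd: "w = (\<lambda>k i. inverse (complex_of_real (r k)) * g k i)" unfolding w_def r_def by simp
  have ipw: "ip N (w k) (w l) = inverse (complex_of_real (r k)) * inverse (complex_of_real (r l)) * ip N (g k) (g l)"
    unfolding wd ip_scale_left ip_scale_right by simp
  show "ip N (w k) (w l) = (if k = l then 1 else 0)"
  proof (cases "k = l")
    case False
    then show ?thesis using og k l ipw by simp
  next
    case True
    define S where "S = (\<Sum>i<N. (cmod (g k i))^2)"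
    have gs: "ip N (g k) (g k) = of_real S" unfolding S_def by (rule ip_self_real)
    have S0: "S \<ge> 0" unfolding S_def by (simp add: sum_nonneg)
    have "S \<noteq> 0" using og k gs by force
    hence Sp: "S > 0" using S0 by simp
    have rk: "r k = sqrt S" unfolding r_def gs by simp
    have e1: "inverse (complex_of_real (sqrt S)) = complex_of_real (inverse (sqrt S))"
      by (rule of_real_inverse[symmetric])
    have e2: "inverse (sqrt S) * inverse (sqrt S) * S = 1" using Sp
      by (simp add: field_simps)
    have "ip N (w k) (w k) = complex_of_real (inverse (sqrt S)) * complex_of_real (inverse (sqrt S)) * of_real S"
      using ipw True gs rk e1 by simp
    also have "\<dots> = complex_of_real (inverse (sqrt S) * inverse (sqrt S) * S)" by simp
    also have "\<dots> = 1" using e2 by simp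
    finally show ?thesis using True by simp
  qed
qed

lemma herm_ip_real:
  assumes "herm n A" shows "cnj (ip n f (mv n A f)) = ip n f (mv n A f)"
  using herm_swap[OF assms] by (simp add: ip_cnj)

lemma real_of_cnj: "cnj z = z \<Longrightarrow> z = complex_of_real (Re z)"
  by (simp add: complex_eq_iff)

lemma mv_vec:
  assumes A: "A \<in> carrier_mat N N" and v: "v \<in> carrier_vec N" and i: "i < N"
  shows "mv N A (\<lambda>j. v $ j) i = (A *\<^sub>v v) $ i"
  using A v i unfolding mv_def by (simp add: scalar_prod_def lessThan_atLeast0)

lemma spectral:
  "A \<in> carrier_mat n n \<Longrightarrow> herm n A \<Longrightarrow> \<exists>u d. eigsys n A u d"
proof (induction n arbitrary: A)
  case 0
  then show ?case unfolding eigsys_def orthonormal_def by simp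
next
  case (Suc n)
  let ?N = "Suc n"
  have A: "A \<in> carrier_mat ?N ?N" and hA: "herm ?N A" by fact+
  obtain as where cp: "char_poly A = (\<Prod>a\<leftarrow>as. [:- a, 1:])" and las: "length as = ?N"
    using char_poly_factorized[OF A] by blast
  then obtain e as' where as: "as = e # as'" by (cases as) auto
  have "poly (char_poly A) e = 0" unfolding cp as by simp
  hence "eigenvalue A e" using eigenvalue_root_char_poly[OF A] by simp
  then obtain v where "eigenvector A v e" unfolding eigenvalue_def by blast
  hence v: "v \<in> carrier_vec ?N" and v0: "v \<noteq> 0\<^sub>v ?N" and Av: "A *\<^sub>v v = e \<cdot>\<^sub>v v"
    unfolding eigenvector_def using A by auto
  interpret cof_vec_space ?N "TYPE(complex)" .
  define b where "b = basis_completion v"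
  define ws where "ws = gram_schmidt ?N b"
  from basis_completion[OF v v0, folded b_def]
  have b: "set b \<subseteq> carrier_vec ?N" and dist_b: "distinct b" and indep: "\<not> lin_dep (set b)"
    and len_b: "length b = ?N" and hdb: "hd b = v" by auto
  from gram_schmidt_result[OF b dist_b indep refl, folded ws_def]
  have ws: "set ws \<subseteq> carrier_vec ?N" "corthogonal ws" "length ws = ?N" by (auto simp: len_b)
  obtain vs where bv: "b = v # vs" using hdb len_b by (cases b) auto
  have hdws: "hd ws = v" unfolding ws_def bv using gram_schmidt_hd[OF v] by simp
  have ws0: "ws ! 0 = v" using hdws ws(3) by (cases ws) auto
  define g where "g = (\<lambda>k i. ws ! k $ i)"
  have og: "\<forall>k<?N. \<forall>l<?N. (ip ?N (g k) (g l) = 0) = (k \<noteq> l)"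
  proof (intro allI impI)
    fix k l assume k: "k < ?N" and l: "l < ?N"
    have wk: "ws ! k \<in> carrier_vec ?N" and wl: "ws ! l \<in> carrier_vec ?N" using ws k l by auto
    have "ip ?N (g k) (g l) = ws ! l \<bullet>c ws ! k"
      unfolding cscalar_eq[OF wl wk] g_def ip_def by (simp add: mult.commute)
    also have "(\<dots> = 0) = (l \<noteq> k)" using corthogonalD[OF ws(2)] k l ws(3) by simp
    finally show "(ip ?N (g k) (g l) = 0) = (k \<noteq> l)" by auto
  qed
  define w where "w \<equiv> \<lambda>k i. inverse (complex_of_real (sqrt (Re (ip ?N (g k) (g k))))) * g k i"
  have ow: "orthonormal ?N w" unfolding w_def by (rule normalize_orth[OF og])
  define c where "c = inverse (complex_of_real (sqrt (Re (ip ?N (g 0) (g 0)))))"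
  have w0: "w 0 = (\<lambda>i. c * v $ i)" unfolding w_def c_def g_def ws0 by simp
  have Aw0: "mv ?N A (w 0) i = e * w 0 i" if i: "i < ?N" for i
  proof -
    have "mv ?N A (w 0) i = c * mv ?N A (\<lambda>j. v $ j) i" unfolding w0 by (rule mv_scale)
    also have "\<dots> = c * (e * v $ i)" using mv_vec[OF A v i] Av i v by simp
    finally show ?thesis unfolding w0 by simp
  qed
  have w00: "ip ?N (w 0) (w 0) = 1" using ow unfolding orthonormal_def by simp
  have "ip ?N (w 0) (mv ?N A (w 0)) = e"
  proof -
    have "ip ?N (w 0) (mv ?N A (w 0)) = ip ?N (w 0) (\<lambda>i. e * w 0 i)"
      by (rule ip_cong) (auto simp: Aw0)
    also have "\<dots> = e" by (simp add: ip_scale_right w00)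
    finally show ?thesis .
  qed
  hence ereal: "e = complex_of_real (Re e)" using herm_ip_real[OF hA, of "w 0"] real_of_cnj by metis
  define B where "B = mat n n (\<lambda>(i,j). ip ?N (w (Suc i)) (mv ?N A (w (Suc j))))"
  have Bc: "B \<in> carrier_mat n n" unfolding B_def by simp
  have Bij: "B $$ (i,j) = ip ?N (w (Suc i)) (mv ?N A (w (Suc j)))" if "i < n" "j < n" for i j
    unfolding B_def using that by simp
  have hB: "herm n B" unfolding herm_def
  proof (intro allI impI)
    fix i j assume i: "i < n" and j: "j < n"
    have "cnj (B $$ (j,i)) = ip ?N (mv ?N A (w (Suc i))) (w (Suc j))"
      unfolding Bij[OF j i] ip_cnj ..
    also have "\<dots> = B $$ (i,j)" unfolding Bij[OF i j] herm_swap[OF hA] ..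
    finally show "B $$ (i,j) = cnj (B $$ (j,i))" by simp
  qed
  obtain u' d' where es: "eigsys n B u' d'" using Suc.IH[OF Bc hB] by blast
  hence ou': "orthonormal n u'" and eu': "\<And>k i. k < n \<Longrightarrow> i < n \<Longrightarrow> mv n B (u' k) i = of_real (d' k) * u' k i"
    unfolding eigsys_def by auto
  define U where "U = (\<lambda>k. case k of 0 \<Rightarrow> w 0 | Suc k' \<Rightarrow> (\<lambda>i. \<Sum>l<n. u' k' l * w (Suc l) i))"
  define D where "D = (\<lambda>k. case k of 0 \<Rightarrow> Re e | Suc k' \<Rightarrow> d' k')"
  have wo: "\<And>a b. a < ?N \<Longrightarrow> b < ?N \<Longrightarrow> ip ?N (w a) (w b) = (if a = b then 1 else 0)"
    using ow unfolding orthonormal_def by blast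
  have ip0S: "ip ?N (w 0) (U (Suc l')) = 0" for l'
    unfolding U_def by (simp add: ip_sum_right wo)
  have ipSS: "ip ?N (U (Suc k')) (U (Suc l')) = ip n (u' k') (u' l')" for k' l'
  proof -
    have "ip ?N (U (Suc k')) (U (Suc l')) = (\<Sum>a<n. cnj (u' k' a) * ip ?N (w (Suc a)) (U (Suc l')))"
      unfolding U_def by (simp add: ip_sum_left)
    also have "\<dots> = (\<Sum>a<n. cnj (u' k' a) * (\<Sum>b<n. u' l' b * (if a = b then 1 else 0)))"
      unfolding U_def by (intro sum.cong refl) (simp add: ip_sum_right wo)
    also have "\<dots> = ip n (u' k') (u' l')" unfolding ip_def
    proof (intro sum.cong refl)
      fix a assume a: "a \<in> {..<n}"
      have "(\<Sum>b<n. u' l' b * (if a = b then 1 else 0)) = (\<Sum>b<n. if a = b then u' l' b else 0)"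
        by (intro sum.cong refl) auto
      also have "\<dots> = u' l' a" using a by simp
      finally show "cnj (u' k' a) * (\<Sum>b<n. u' l' b * (if a = b then 1 else 0)) = cnj (u' k' a) * u' l' a" by simp
    qed
    finally show ?thesis .
  qed
  have oU: "orthonormal ?N U" unfolding orthonormal_def
  proof (intro allI impI)
    fix k l assume k: "k < ?N" and l: "l < ?N"
    show "ip ?N (U k) (U l) = (if k = l then 1 else 0)"
    proof (cases k)
      case 0 note k0 = this
      then show ?thesis
      proof (cases l)
        case 0 then show ?thesis using k0 w00 unfolding U_def by simp
      next
        case (Suc l') then show ?thesis using k0 ip0S[of l'] unfolding U_def by simp
      qed
    next
      case (Suc k') note kS = this
      then show ?thesis
      proof (cases l)
        case 0
        have "ip ?N (U k) (U l) = cnj (ip ?N (U l) (U k))" by (simp add: ip_cnj)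
        also have "\<dots> = 0" using kS 0 ip0S[of k'] unfolding U_def by simp
        finally show ?thesis using kS 0 by simp
      next
        case (Suc l')
        then show ?thesis using kS ipSS[of k' l'] ou' k l unfolding orthonormal_def by auto
      qed
    qed
  qed
  have Awl: "mv ?N A (w (Suc l)) i = (\<Sum>r<n. B $$ (r,l) * w (Suc r) i)" if l: "l < n" and i: "i < ?N" for l i
  proof -
    have "mv ?N A (w (Suc l)) i = (\<Sum>r<?N. ip ?N (w r) (mv ?N A (w (Suc l))) * w r i)"
      by (rule orth_expand[OF ow i])
    also have "\<dots> = ip ?N (w 0) (mv ?N A (w (Suc l))) * w 0 i + (\<Sum>r<n. ip ?N (w (Suc r)) (mv ?N A (w (Suc l))) * w (Suc r) i)"
      by (rule sum.lessThan_Suc_shift)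
    also have "ip ?N (w 0) (mv ?N A (w (Suc l))) = 0"
    proof -
      have "ip ?N (w 0) (mv ?N A (w (Suc l))) = ip ?N (mv ?N A (w 0)) (w (Suc l))" by (rule herm_swap[OF hA])
      also have "\<dots> = ip ?N (\<lambda>i. e * w 0 i) (w (Suc l))" by (rule ip_cong) (auto simp: Aw0)
      also have "\<dots> = 0" using wo[of 0 "Suc l"] l by (simp add: ip_scale_left)
      finally show ?thesis .
    qed
    finally show ?thesis using l by (simp add: Bij)
  qed
  have eU: "mv ?N A (U k) i = of_real (D k) * U k i" if k: "k < ?N" and i: "i < ?N" for k i
  proof (cases k)
    case 0 then show ?thesis unfolding U_def D_def using Aw0[OF i] ereal by simp
  next
    case (Suc k')
    have k': "k' < n" using k Suc by simp
    have "mv ?N A (U k) i = (\<Sum>l<n. u' k' l * mv ?N A (w (Suc l)) i)"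
      unfolding Suc U_def by (simp add: mv_sum)
    also have "\<dots> = (\<Sum>l<n. u' k' l * (\<Sum>r<n. B $$ (r,l) * w (Suc r) i))"
      by (intro sum.cong refl) (simp add: Awl i)
    also have "\<dots> = (\<Sum>l<n. \<Sum>r<n. u' k' l * B $$ (r,l) * w (Suc r) i)"
      by (simp add: sum_distrib_left mult.assoc)
    also have "\<dots> = (\<Sum>r<n. \<Sum>l<n. u' k' l * B $$ (r,l) * w (Suc r) i)"
      by (rule sum.swap)
    also have "\<dots> = (\<Sum>r<n. mv n B (u' k') r * w (Suc r) i)"
      unfolding mv_def by (intro sum.cong refl) (simp add: sum_distrib_left sum_distrib_right mult_ac)
    also have "\<dots> = (\<Sum>r<n. of_real (d' k') * (u' k' r * w (Suc r) i))"
      by (intro sum.cong refl) (simp add: eu' k')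
    also have "\<dots> = of_real (D k) * U k i"
      unfolding Suc U_def D_def by (simp add: sum_distrib_left)
    finally show ?thesis .
  qed
  show ?case unfolding eigsys_def using oU eU by blast
qed

lemma proots_linear_prod: "proots (\<Prod>a\<leftarrow>as. [:- a, 1:]) = mset (as :: complex list)"
proof (induction as)
  case Nil then show ?case by simp
next
  case (Cons a as)
  have nz: "(\<Prod>a\<leftarrow>as. [:- a, 1:]) \<noteq> (0 :: complex poly)" by (auto simp: prod_list_zero_iff)
  have e: "(\<Prod>a\<leftarrow>a # as. [:- a, 1:]) = [:- a, 1:] * (\<Prod>a\<leftarrow>as. [:- a, 1:])" by simp
  have "proots (\<Prod>a\<leftarrow>a # as. [:- a, 1:]) = proots [:- a, 1:] + proots (\<Prod>a\<leftarrow>as. [:- a, 1:])"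
    unfolding e by (rule proots_mult) (use nz in simp_all)
  also have "proots [:- a, 1:] = {#a#}" using proots_linear_factor[of "-a"] by simp
  finally show ?case using Cons by simp
qed

lemma mat_mult_entry:
  fixes X Y :: "'a :: comm_ring_1 mat"
  assumes "X \<in> carrier_mat n n" "Y \<in> carrier_mat n n" "i < n" "j < n"
  shows "(X * Y) $$ (i,j) = (\<Sum>k<n. X $$ (i,k) * Y $$ (k,j))"
  using assms by (simp add: index_mult_mat scalar_prod_def lessThan_atLeast0)

lemma vn_ent:
  assumes A: "A \<in> carrier_mat n n" and es: "eigsys n A u d"
  shows "vn_entropy A = (\<Sum>k<n. eta (d k))"
proof -
  have o: "orthonormal n u" and eu: "\<And>k i. k < n \<Longrightarrow> i < n \<Longrightarrow> mv n A (u k) i = of_real (d k) * u k i"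
    using es unfolding eigsys_def by auto
  define W where "W = mat n n (\<lambda>(i,k). u k i)"
  define W' where "W' = mat n n (\<lambda>(k,i). cnj (u k i))"
  define D where "D = mat n n (\<lambda>(i,j). if i = j then complex_of_real (d i) else 0)"
  have W: "W \<in> carrier_mat n n" and W': "W' \<in> carrier_mat n n" and D: "D \<in> carrier_mat n n"
    unfolding W_def W'_def D_def by auto
  have W'W: "W' * W = 1\<^sub>m n"
  proof (rule eq_matI)
    fix k l assume k: "k < dim_row (1\<^sub>m n :: complex mat)" and l: "l < dim_col (1\<^sub>m n :: complex mat)"
    have "(W' * W) $$ (k,l) = row W' k \<bullet> col W l" using k l W W' by (simp add: index_mult_mat)
    also have "\<dots> = ip n (u k) (u l)" using k l unfolding W_def W'_def ip_def scalar_prod_def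
      by (simp add: lessThan_atLeast0)
    also have "\<dots> = 1\<^sub>m n $$ (k,l)" using o k l unfolding orthonormal_def by simp
    finally show "(W' * W) $$ (k,l) = 1\<^sub>m n $$ (k,l)" .
  qed (use W W' in auto)
  hence WW': "W * W' = 1\<^sub>m n" using mat_mult_left_right_inverse[OF W' W] by simp
  have ADW: "A = W * D * W'"
  proof (rule eq_matI)
    fix i j assume i: "i < dim_row (W * D * W')" and j: "j < dim_col (W * D * W')"
    hence i: "i < n" and j: "j < n" using W D W' by auto
    have WD: "(W * D) $$ (i,k) = u k i * of_real (d k)" if k: "k < n" for k
    proof -
      have "(W * D) $$ (i,k) = row W i \<bullet> col D k" using i k W D by (simp add: index_mult_mat)
      also have "\<dots> = (\<Sum>l<n. u l i * (if l = k then complex_of_real (d l) else 0))"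
        using i k unfolding W_def D_def scalar_prod_def by (intro sum.cong) (auto simp: lessThan_atLeast0)
      also have "\<dots> = u k i * of_real (d k)"
      proof -
        have "(\<Sum>l<n. u l i * (if l = k then complex_of_real (d l) else 0)) = (\<Sum>l<n. if l = k then u k i * of_real (d k) else 0)"
          by (intro sum.cong refl) auto
        thus ?thesis using k by simp
      qed
      finally show ?thesis .
    qed
    have WDc: "W * D \<in> carrier_mat n n" using W D by simp
    have "(W * D * W') $$ (i,j) = (\<Sum>k<n. (W * D) $$ (i,k) * W' $$ (k,j))"
      by (rule mat_mult_entry[OF WDc W' i j])
    also have "\<dots> = (\<Sum>k<n. (W * D) $$ (i,k) * cnj (u k j))"
      using j unfolding W'_def by (intro sum.cong refl) auto
    also have "\<dots> = (\<Sum>k<n. mv n A (u k) i * cnj (u k j))"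
      by (intro sum.cong refl) (simp add: WD eu i mult.commute)
    also have "\<dots> = A $$ (i,j)" using mat_reconstruct[OF o i j] by simp
    finally show "A $$ (i,j) = (W * D * W') $$ (i,j)" by simp
  qed (use A W D W' in auto)
  have sim: "similar_mat A D" unfolding similar_mat_def similar_mat_wit_def
    using A W W' D W'W WW' ADW by (intro exI[of _ W] exI[of _ W']) (auto simp: Let_def)
  have ut: "upper_triangular D" unfolding upper_triangular_def D_def by auto
  have dg: "diag_mat D = map (\<lambda>i. complex_of_real (d i)) [0..<n]"
    unfolding diag_mat_def D_def by auto
  have cpA: "char_poly A = (\<Prod>a\<leftarrow>map (\<lambda>i. complex_of_real (d i)) [0..<n]. [:- a, 1:])"
    using char_poly_similar[OF sim] char_poly_upper_triangular[OF D ut] dg by simp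
  have pr: "proots (char_poly A) = mset (map (\<lambda>i. complex_of_real (d i)) [0..<n])"
    unfolding cpA by (rule proots_linear_prod)
  have "vn_entropy A = - (\<Sum>i\<in>{0..<n}. d i * ln (d i))"
    unfolding vn_entropy_def pr by (simp add: image_mset.compositionality o_def sum_unfold_sum_mset[symmetric])
  also have "\<dots> = (\<Sum>k<n. eta (d k))"
    by (simp add: eta_def sum_negf lessThan_atLeast0)
  finally show ?thesis .
qed

definition psd :: "nat \<Rightarrow> complex mat \<Rightarrow> bool" where
  "psd n A \<longleftrightarrow> (\<forall>f. 0 \<le> Re (ip n f (mv n A f)))"

lemma eig_ip:
  assumes es: "eigsys n A u d" and k: "k < n"
  shows "ip n (u k) (mv n A (u k)) = of_real (d k)"
proof -
  have o: "orthonormal n u" and eu: "\<And>k i. k < n \<Longrightarrow> i < n \<Longrightarrow> mv n A (u k) i = of_real (d k) * u k i"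
    using es unfolding eigsys_def by auto
  have "ip n (u k) (mv n A (u k)) = ip n (u k) (\<lambda>i. of_real (d k) * u k i)"
    by (rule ip_cong) (auto simp: eu k)
  also have "\<dots> = of_real (d k)" using o k unfolding orthonormal_def by (simp add: ip_scale_right)
  finally show ?thesis .
qed

lemma eig_nonneg:
  assumes es: "eigsys n A u d" and p: "psd n A" and k: "k < n"
  shows "0 \<le> d k"
  using p eig_ip[OF es k] unfolding psd_def by (metis Re_complex_of_real)

lemma basis_jensen:
  assumes es: "eigsys n X u d" and d0: "\<And>k. k < n \<Longrightarrow> 0 \<le> d k" and oe: "orthonormal n e"
  defines "al \<equiv> \<lambda>k. Re (ip n (e k) (mv n X (e k)))"
  shows "(\<Sum>j<n. eta (d j)) \<le> (\<Sum>k<n. eta (al k))"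
    and "(\<Sum>j<n. eta (d j)) = (\<Sum>k<n. eta (al k)) \<Longrightarrow> \<forall>k<n. \<forall>i<n. mv n X (e k) i = of_real (al k) * e k i"
proof -
  have ou: "orthonormal n u" and eu: "\<And>k i. k < n \<Longrightarrow> i < n \<Longrightarrow> mv n X (u k) i = of_real (d k) * u k i"
    using es unfolding eigsys_def by auto
  define c where "c = (\<lambda>k j. ip n (u j) (e k))"
  define Dm where "Dm = (\<lambda>k j. (cmod (c k j))^2)"
  have Xe: "mv n X (e k) i = (\<Sum>j<n. (c k j * of_real (d j)) * u j i)" if i: "i < n" for k i
  proof -
    have "mv n X (e k) i = mv n X (\<lambda>i. \<Sum>j<n. c k j * u j i) i"
      unfolding c_def by (rule mv_cong) (rule orth_expand[OF ou])
    also have "\<dots> = (\<Sum>j<n. c k j * mv n X (u j) i)" by (rule mv_sum)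
    also have "\<dots> = (\<Sum>j<n. (c k j * of_real (d j)) * u j i)"
      by (intro sum.cong refl) (simp add: eu i)
    finally show ?thesis .
  qed
  have al_eq: "al k = (\<Sum>j<n. Dm k j * d j)" for k
  proof -
    have "ip n (e k) (mv n X (e k)) = ip n (e k) (\<lambda>i. \<Sum>j<n. (c k j * of_real (d j)) * u j i)"
      by (rule ip_cong) (auto simp: Xe)
    also have "\<dots> = (\<Sum>j<n. (c k j * of_real (d j)) * ip n (e k) (u j))" by (rule ip_sum_right)
    also have "\<dots> = (\<Sum>j<n. of_real (Dm k j * d j))"
    proof (intro sum.cong refl)
      fix j
      have "ip n (e k) (u j) = cnj (c k j)" unfolding c_def by (simp add: ip_cnj)
      hence "(c k j * of_real (d j)) * ip n (e k) (u j) = (c k j * cnj (c k j)) * of_real (d j)" by simp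
      also have "c k j * cnj (c k j) = of_real (Dm k j)" unfolding Dm_def by (rule complex_norm_square[symmetric])
      finally show "(c k j * of_real (d j)) * ip n (e k) (u j) = of_real (Dm k j * d j)" by simp
    qed
    finally show ?thesis unfolding al_def by (simp only: Re_sum) simp
  qed
  have row1: "(\<Sum>j<n. Dm k j) = 1" if k: "k < n" for k
  proof -
    have "Re (ip n (e k) (e k)) = (\<Sum>j<n. Dm k j)" unfolding Dm_def c_def by (rule parseval_real[OF ou])
    moreover have "ip n (e k) (e k) = 1" using oe k unfolding orthonormal_def by simp
    ultimately show ?thesis by simp
  qed
  have col1: "(\<Sum>k<n. Dm k j) = 1" if j: "j < n" for j
  proof -
    have "Re (ip n (u j) (u j)) = (\<Sum>k<n. (cmod (ip n (e k) (u j)))^2)" by (rule parseval_real[OF oe])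
    also have "\<dots> = (\<Sum>k<n. Dm k j)" unfolding Dm_def c_def
    proof (intro sum.cong refl)
      fix k
      have "ip n (e k) (u j) = cnj (ip n (u j) (e k))" by (simp add: ip_cnj)
      thus "(cmod (ip n (e k) (u j)))^2 = (cmod (ip n (u j) (e k)))^2" by simp
    qed
    finally show ?thesis using ou j unfolding orthonormal_def by simp
  qed
  have Dm0: "0 \<le> Dm k j" for k j unfolding Dm_def by simp
  have jk: "(\<Sum>j<n. Dm k j * eta (d j)) \<le> eta (al k)" if k: "k < n" for k
    unfolding al_eq by (rule eta_jensen(1)) (use Dm0 row1[OF k] d0 in auto)
  have jk_eq: "\<forall>j<n. Dm k j \<noteq> 0 \<longrightarrow> d j = al k"
    if k: "k < n" and eq: "(\<Sum>j<n. Dm k j * eta (d j)) = eta (al k)" for k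
  proof -
    have "\<forall>j\<in>{..<n}. Dm k j \<noteq> 0 \<longrightarrow> d j = (\<Sum>j<n. Dm k j * d j)"
      by (rule eta_jensen(2)) (use Dm0 row1[OF k] d0 eq[unfolded al_eq] in auto)
    thus ?thesis unfolding al_eq by simp
  qed
  have lhs: "(\<Sum>j<n. eta (d j)) = (\<Sum>k<n. \<Sum>j<n. Dm k j * eta (d j))"
  proof -
    have "(\<Sum>j<n. eta (d j)) = (\<Sum>j<n. (\<Sum>k<n. Dm k j) * eta (d j))"
      by (intro sum.cong refl) (simp add: col1)
    also have "\<dots> = (\<Sum>j<n. \<Sum>k<n. Dm k j * eta (d j))" by (simp add: sum_distrib_right)
    also have "\<dots> = (\<Sum>k<n. \<Sum>j<n. Dm k j * eta (d j))" by (rule sum.swap)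
    finally show ?thesis .
  qed
  show le: "(\<Sum>j<n. eta (d j)) \<le> (\<Sum>k<n. eta (al k))"
    unfolding lhs by (intro sum_mono) (simp add: jk)
  assume eq: "(\<Sum>j<n. eta (d j)) = (\<Sum>k<n. eta (al k))"
  have gap: "(\<Sum>k<n. eta (al k) - (\<Sum>j<n. Dm k j * eta (d j))) = 0"
    using eq unfolding lhs by (simp add: sum_subtractf)
  have gap0: "\<forall>k\<in>{..<n}. eta (al k) - (\<Sum>j<n. Dm k j * eta (d j)) = 0"
  proof -
    have "((\<Sum>k<n. eta (al k) - (\<Sum>j<n. Dm k j * eta (d j))) = 0) =
          (\<forall>k\<in>{..<n}. eta (al k) - (\<Sum>j<n. Dm k j * eta (d j)) = 0)"
      by (rule sum_nonneg_eq_0_iff) (use jk in simp_all)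
    thus ?thesis using gap by blast
  qed
  show "\<forall>k<n. \<forall>i<n. mv n X (e k) i = of_real (al k) * e k i"
  proof (intro allI impI)
    fix k i assume k: "k < n" and i: "i < n"
    have "(\<Sum>j<n. Dm k j * eta (d j)) = eta (al k)" using gap0 k by simp
    note dj = jk_eq[OF k this]
    have "mv n X (e k) i = (\<Sum>j<n. (c k j * of_real (d j)) * u j i)" by (rule Xe[OF i])
    also have "\<dots> = (\<Sum>j<n. of_real (al k) * (c k j * u j i))"
    proof (intro sum.cong refl)
      fix j assume j: "j \<in> {..<n}"
      show "(c k j * of_real (d j)) * u j i = of_real (al k) * (c k j * u j i)"
      proof (cases "Dm k j = 0")
        case True hence "c k j = 0" unfolding Dm_def by simp
        thus ?thesis by simp
      next
        case False thus ?thesis using dj j by simp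
      qed
    qed
    also have "\<dots> = of_real (al k) * e k i"
      using orth_expand[OF ou i, of "e k"] unfolding c_def by (simp add: sum_distrib_left)
    finally show "mv n X (e k) i = of_real (al k) * e k i" .
  qed
qed

lemma eta_concave2:
  assumes t: "0 < t" "t < 1" and a: "0 \<le> a" and b: "0 \<le> b"
  shows "t * eta a + (1 - t) * eta b \<le> eta (t * a + (1 - t) * b)"
    and "t * eta a + (1 - t) * eta b = eta (t * a + (1 - t) * b) \<Longrightarrow> a = b"
proof -
  define w where "w = (\<lambda>x::bool. if x then t else 1 - t)"
  define v where "v = (\<lambda>x::bool. if x then a else b)"
  have s1: "(\<Sum>x\<in>UNIV. w x * eta (v x)) = t * eta a + (1 - t) * eta b"
    unfolding w_def v_def UNIV_bool by simp
  have s2: "(\<Sum>x\<in>UNIV. w x * v x) = t * a + (1 - t) * b"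
    unfolding w_def v_def UNIV_bool by simp
  have w1: "(\<Sum>x\<in>UNIV. w x) = 1" unfolding w_def UNIV_bool by simp
  have w0: "\<And>x. 0 \<le> w x" unfolding w_def using t by simp
  have v0: "\<And>x. 0 \<le> v x" unfolding v_def using a b by simp
  note J = eta_jensen[of "UNIV :: bool set" w v, OF _ w0 w1 v0, unfolded s1 s2]
  show "t * eta a + (1 - t) * eta b \<le> eta (t * a + (1 - t) * b)" using J(1) by simp
  assume "t * eta a + (1 - t) * eta b = eta (t * a + (1 - t) * b)"
  hence "\<forall>x. w x \<noteq> 0 \<longrightarrow> v x = t * a + (1 - t) * b" using J(2) by simp
  note H = this
  have "a = t * a + (1 - t) * b" using H[rule_format, of True] t unfolding w_def v_def by simp
  moreover have "b = t * a + (1 - t) * b" using H[rule_format, of False] t unfolding w_def v_def by simp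
  ultimately show "a = b" by simp
qed

lemma ent_upper:
  assumes X: "X \<in> carrier_mat n n" and h: "herm n X" and p: "psd n X" and oe: "orthonormal n e"
  shows "vn_entropy X \<le> (\<Sum>k<n. eta (Re (ip n (e k) (mv n X (e k)))))"
proof -
  obtain u d where es: "eigsys n X u d" using spectral[OF X h] by blast
  show ?thesis unfolding vn_ent[OF X es]
    by (rule basis_jensen(1)[OF es _ oe]) (rule eig_nonneg[OF es p])
qed

lemma ent_eig:
  assumes X: "X \<in> carrier_mat n n" and es: "eigsys n X e l"
  shows "vn_entropy X = (\<Sum>k<n. eta (Re (ip n (e k) (mv n X (e k)))))"
  unfolding vn_ent[OF X es] by (intro sum.cong refl) (simp add: eig_ip[OF es])

lemma ent_strict:
  assumes A: "A \<in> carrier_mat n n" and B: "B \<in> carrier_mat n n" and C: "C \<in> carrier_mat n n"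
    and hA: "herm n A" and hB: "herm n B" and pA: "psd n A" and pB: "psd n B"
    and t: "0 < t" "t < 1"
    and Ceq: "\<forall>i<n. \<forall>j<n. C $$ (i,j) = of_real t * A $$ (i,j) + of_real (1 - t) * B $$ (i,j)"
    and neq: "\<exists>i<n. \<exists>j<n. A $$ (i,j) \<noteq> B $$ (i,j)"
  shows "t * vn_entropy A + (1 - t) * vn_entropy B < vn_entropy C"
proof -
  have mvC: "mv n C f i = of_real t * mv n A f i + of_real (1 - t) * mv n B f i" if i: "i < n" for f i
  proof -
    have "mv n C f i = (\<Sum>j<n. (of_real t * A $$ (i,j) + of_real (1 - t) * B $$ (i,j)) * f j)"
      unfolding mv_def using Ceq i by (intro sum.cong refl) simp
    also have "\<dots> = of_real t * mv n A f i + of_real (1 - t) * mv n B f i"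
      unfolding mv_def by (simp add: sum.distrib sum_distrib_left distrib_right mult.assoc)
    finally show ?thesis .
  qed
  have ipC: "ip n f (mv n C f) = of_real t * ip n f (mv n A f) + of_real (1 - t) * ip n f (mv n B f)" for f
  proof -
    have "ip n f (mv n C f) = ip n f (\<lambda>i. of_real t * mv n A f i + of_real (1 - t) * mv n B f i)"
      by (rule ip_cong) (auto simp: mvC)
    also have "\<dots> = ip n f (\<lambda>i. of_real t * mv n A f i) + ip n f (\<lambda>i. of_real (1 - t) * mv n B f i)"
      unfolding ip_def by (simp only: distrib_left sum.distrib)
    also have "\<dots> = of_real t * ip n f (mv n A f) + of_real (1 - t) * ip n f (mv n B f)"
      by (simp only: ip_scale_right)
    finally show ?thesis .
  qed
  have reC: "Re (ip n f (mv n C f)) = t * Re (ip n f (mv n A f)) + (1 - t) * Re (ip n f (mv n B f))" for f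
    unfolding ipC by simp
  have hC: "herm n C" unfolding herm_def
  proof (intro allI impI)
    fix i j assume i: "i < n" and j: "j < n"
    have "A $$ (i,j) = cnj (A $$ (j,i))" "B $$ (i,j) = cnj (B $$ (j,i))"
      using hA hB i j unfolding herm_def by blast+
    thus "C $$ (i,j) = cnj (C $$ (j,i))" using Ceq i j by simp
  qed
  have pC: "psd n C" unfolding psd_def
  proof
    fix f
    have "0 \<le> Re (ip n f (mv n A f))" "0 \<le> Re (ip n f (mv n B f))" using pA pB unfolding psd_def by auto
    thus "0 \<le> Re (ip n f (mv n C f))" unfolding reC using t by simp
  qed
  obtain e l where esC: "eigsys n C e l" using spectral[OF C hC] by blast
  have oe: "orthonormal n e" using esC unfolding eigsys_def by simp
  define al where "al = (\<lambda>k. Re (ip n (e k) (mv n A (e k))))"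
  define be where "be = (\<lambda>k. Re (ip n (e k) (mv n B (e k))))"
  have al0: "0 \<le> al k" for k using pA unfolding psd_def al_def by simp
  have be0: "0 \<le> be k" for k using pB unfolding psd_def be_def by simp
  have HC: "vn_entropy C = (\<Sum>k<n. eta (t * al k + (1 - t) * be k))"
    unfolding ent_eig[OF C esC] reC al_def be_def ..
  have HA: "vn_entropy A \<le> (\<Sum>k<n. eta (al k))" unfolding al_def by (rule ent_upper[OF A hA pA oe])
  have HB: "vn_entropy B \<le> (\<Sum>k<n. eta (be k))" unfolding be_def by (rule ent_upper[OF B hB pB oe])
  have trm: "t * eta (al k) + (1 - t) * eta (be k) \<le> eta (t * al k + (1 - t) * be k)" for k
    by (rule eta_concave2(1)[OF t al0 be0])
  define S2 where "S2 = (\<Sum>k<n. t * eta (al k) + (1 - t) * eta (be k))"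
  have S2eq: "S2 = t * (\<Sum>k<n. eta (al k)) + (1 - t) * (\<Sum>k<n. eta (be k))"
    unfolding S2_def by (simp add: sum.distrib sum_distrib_left)
  have S21: "S2 \<le> vn_entropy C" unfolding HC S2_def by (intro sum_mono trm)
  have S32: "t * vn_entropy A + (1 - t) * vn_entropy B \<le> S2"
    unfolding S2eq using HA HB t by (intro add_mono mult_left_mono) auto
  show ?thesis
  proof (rule ccontr)
    assume "\<not> ?thesis"
    hence le: "vn_entropy C \<le> t * vn_entropy A + (1 - t) * vn_entropy B" by simp
    have e12: "S2 = vn_entropy C" using S21 S32 le by simp
    have "t * ((\<Sum>k<n. eta (al k)) - vn_entropy A) + (1 - t) * ((\<Sum>k<n. eta (be k)) - vn_entropy B) = 0"
      using S21 S32 le S2eq by (simp add: algebra_simps)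
    moreover have "0 \<le> t * ((\<Sum>k<n. eta (al k)) - vn_entropy A)" using HA t by simp
    moreover have "0 \<le> (1 - t) * ((\<Sum>k<n. eta (be k)) - vn_entropy B)" using HB t by simp
    ultimately have eA: "vn_entropy A = (\<Sum>k<n. eta (al k))" and eB: "vn_entropy B = (\<Sum>k<n. eta (be k))"
      using t by (auto simp: add_nonneg_eq_0_iff)
    have gap: "(\<Sum>k<n. eta (t * al k + (1 - t) * be k) - (t * eta (al k) + (1 - t) * eta (be k))) = 0"
      using e12 unfolding HC S2_def by (simp add: sum_subtractf)
    have gap0: "\<forall>k\<in>{..<n}. eta (t * al k + (1 - t) * be k) - (t * eta (al k) + (1 - t) * eta (be k)) = 0"
    proof -
      have "((\<Sum>k<n. eta (t * al k + (1 - t) * be k) - (t * eta (al k) + (1 - t) * eta (be k))) = 0) =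
            (\<forall>k\<in>{..<n}. eta (t * al k + (1 - t) * be k) - (t * eta (al k) + (1 - t) * eta (be k)) = 0)"
        by (rule sum_nonneg_eq_0_iff) (use trm in simp_all)
      thus ?thesis using gap by blast
    qed
    have albe: "al k = be k" if k: "k < n" for k
      by (rule eta_concave2(2)[OF t al0 be0]) (use gap0 k in simp)
    obtain uA dA where esA: "eigsys n A uA dA" using spectral[OF A hA] by blast
    obtain uB dB where esB: "eigsys n B uB dB" using spectral[OF B hB] by blast
    have EA: "\<forall>k<n. \<forall>i<n. mv n A (e k) i = of_real (al k) * e k i"
      unfolding al_def
      by (rule basis_jensen(2)[OF esA _ oe]) (use eig_nonneg[OF esA pA] eA vn_ent[OF A esA] al_def in auto)
    have EB: "\<forall>k<n. \<forall>i<n. mv n B (e k) i = of_real (be k) * e k i"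
      unfolding be_def
      by (rule basis_jensen(2)[OF esB _ oe]) (use eig_nonneg[OF esB pB] eB vn_ent[OF B esB] be_def in auto)
    have "A $$ (i,j) = B $$ (i,j)" if i: "i < n" and j: "j < n" for i j
    proof -
      have "A $$ (i,j) = (\<Sum>k<n. mv n A (e k) i * cnj (e k j))" by (rule mat_reconstruct[OF oe i j])
      also have "\<dots> = (\<Sum>k<n. mv n B (e k) i * cnj (e k j))"
        by (intro sum.cong refl) (simp add: EA EB albe i)
      also have "\<dots> = B $$ (i,j)" by (rule mat_reconstruct[OF oe i j, symmetric])
      finally show ?thesis .
    qed
    thus False using neq by blast
  qed
qed

lemma eta_sqrt_bound:
  assumes "0 \<le> x" "x \<le> 1" shows "\<bar>eta x\<bar> \<le> sqrt x * 2"
proof (cases "x = 0")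
  case True then show ?thesis by (simp add: eta_def)
next
  case False
  hence xp: "0 < x" using assms by simp
  have s: "sqrt x > 0" using xp by simp
  have lnx: "ln x \<le> 0" using assms xp by simp
  have "ln (1 / sqrt x) \<le> 1 / sqrt x - 1" using ln_le_minus_one[of "1 / sqrt x"] s by simp
  hence "- ln (sqrt x) \<le> 1 / sqrt x - 1" using s by (simp add: ln_div)
  moreover have "ln (sqrt x) = ln x / 2" using xp by (simp add: ln_sqrt)
  ultimately have "- ln x \<le> 2 / sqrt x" by simp
  hence "x * (- ln x) \<le> x * (2 / sqrt x)" using xp by (intro mult_left_mono) auto
  also have "x * (2 / sqrt x) = sqrt x * 2"
    using xp by (simp add: field_simps)
  finally have "eta x \<le> sqrt x * 2" by (simp add: eta_def)
  moreover have "0 \<le> eta x" unfolding eta_def using xp lnx by (simp add: mult_nonneg_nonpos)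
  ultimately show ?thesis by simp
qed

lemma eta_tendsto:
  fixes y :: "nat \<Rightarrow> real"
  assumes y0: "\<And>n. 0 \<le> y n" and lim: "y \<longlonglongrightarrow> c"
  shows "(\<lambda>n. eta (y n)) \<longlonglongrightarrow> eta c"
proof (cases "c = 0")
  case False
  have "(\<lambda>n. - (y n * ln (y n))) \<longlonglongrightarrow> - (c * ln c)"
    by (intro tendsto_intros lim False)
  thus ?thesis unfolding eta_def .
next
  case True
  have sq: "(\<lambda>n. sqrt (y n)) \<longlonglongrightarrow> 0" using tendsto_real_sqrt[OF lim] True by simp
  have ev: "eventually (\<lambda>n. y n < 1) sequentially"
    using lim True by (auto dest: order_tendstoD(2)[of _ _ _ 1])
  have "eventually (\<lambda>n. norm (eta (y n)) \<le> norm (sqrt (y n)) * 2) sequentially"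
    using ev by eventually_elim (use y0 eta_sqrt_bound in auto)
  hence "(\<lambda>n. eta (y n)) \<longlonglongrightarrow> 0" by (rule tendsto_0_le[OF sq])
  thus ?thesis using True by (simp add: eta_def)
qed

lemma finite_BW:
  fixes q :: "nat \<Rightarrow> 'a \<Rightarrow> real"
  assumes "finite F" and b: "\<And>n x. \<bar>q n x\<bar> \<le> 1"
  shows "\<exists>r. strict_mono r \<and> (\<forall>x\<in>F. convergent (\<lambda>n. q (r n) x))"
  using assms(1)
proof (induction F rule: finite_induct)
  case empty
  show ?case by (rule exI[of _ id]) (simp add: strict_mono_def)
next
  case (insert x F)
  then obtain r where r: "strict_mono r" and c: "\<forall>y\<in>F. convergent (\<lambda>n. q (r n) y)" by blast
  obtain f where f: "strict_mono f" and mf: "monoseq (\<lambda>n. q (r (f n)) x)"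
    using seq_monosub[of "\<lambda>n. q (r n) x"] by blast
  have "Bseq (\<lambda>n. q (r (f n)) x)" by (rule BseqI'[of _ 1]) (simp add: b)
  hence cx: "convergent (\<lambda>n. q (r (f n)) x)" using Bseq_monoseq_convergent mf by blast
  have cF: "convergent (\<lambda>n. q (r (f n)) y)" if y: "y \<in> F" for y
  proof -
    from c y obtain l where "(\<lambda>n. q (r n) y) \<longlonglongrightarrow> l" unfolding convergent_def by blast
    from LIMSEQ_subseq_LIMSEQ[OF this f] have "(\<lambda>n. q (r (f n)) y) \<longlonglongrightarrow> l" by (simp add: o_def)
    thus ?thesis unfolding convergent_def by blast
  qed
  show ?case
    by (rule exI[of _ "r \<circ> f"]) (use strict_mono_o[OF r f] cx cF in \<open>auto simp: o_def\<close>)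
qed

lemma density_props:
  assumes d: "density m A"
  shows "A \<in> carrier_mat m m" "herm m A" "psd m A"
proof -
  show A: "A \<in> carrier_mat m m" using d unfolding density_def by simp
  have adj: "mat_adjoint A = A" using d unfolding density_def by simp
  show "herm m A" unfolding herm_def
  proof (intro allI impI)
    fix i j assume i: "i < m" and j: "j < m"
    have "mat_adjoint A $$ (i,j) = cnj (A $$ (j,i))"
      using A i j unfolding mat_adjoint_def by (simp add: mat_of_rows_index cols_nth)
    thus "A $$ (i,j) = cnj (A $$ (j,i))" using adj by simp
  qed
  show "psd m A" unfolding psd_def
  proof
    fix f :: "nat \<Rightarrow> complex"
    define v where "v = vec m f"
    have v: "v \<in> carrier_vec m" unfolding v_def by simp
    have "conjugate v \<bullet> (A *\<^sub>v v) = ip m f (mv m A f)"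
      using A unfolding v_def ip_def mv_def scalar_prod_def
      by (simp add: lessThan_atLeast0) (intro sum.cong refl, auto simp: scalar_prod_def)
    moreover have "0 \<le> Re (conjugate v \<bullet> (A *\<^sub>v v))" using d v unfolding density_def by blast
    ultimately show "0 \<le> Re (ip m f (mv m A f))" by simp
  qed
qed

context
  fixes \<rho> :: "'n::finite \<Rightarrow> complex mat" and m :: nat
  assumes dens: "\<forall>x. density m (\<rho> x)"
begin

lemma rho_c: "\<rho> x \<in> carrier_mat m m" using density_props(1) dens by blast
lemma rho_h: "herm m (\<rho> x)" using density_props(2) dens by blast
lemma rho_p: "psd m (\<rho> x)" using density_props(3) dens by blast

lemma mix_c: "mix m \<rho> p \<in> carrier_mat m m" unfolding mix_def by simp

lemma mix_ent: "i < m \<Longrightarrow> j < m \<Longrightarrow> mix m \<rho> p $$ (i,j) = (\<Sum>x\<in>UNIV. of_real (p x) * \<rho> x $$ (i,j))"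
  unfolding mix_def by simp

lemma mv_mix: "i < m \<Longrightarrow> mv m (mix m \<rho> p) f i = (\<Sum>x\<in>UNIV. of_real (p x) * mv m (\<rho> x) f i)"
proof -
  assume i: "i < m"
  have "mv m (mix m \<rho> p) f i = (\<Sum>j<m. \<Sum>x\<in>UNIV. of_real (p x) * (\<rho> x $$ (i,j) * f j))"
    unfolding mv_def by (intro sum.cong refl) (simp add: mix_ent i sum_distrib_right mult.assoc)
  also have "\<dots> = (\<Sum>x\<in>UNIV. \<Sum>j<m. of_real (p x) * (\<rho> x $$ (i,j) * f j))" by (rule sum.swap)
  also have "\<dots> = (\<Sum>x\<in>UNIV. of_real (p x) * mv m (\<rho> x) f i)"
    unfolding mv_def by (simp add: sum_distrib_left)
  finally show ?thesis .
qed

lemma ip_mix: "ip m g (mv m (mix m \<rho> p) f) = (\<Sum>x\<in>UNIV. of_real (p x) * ip m g (mv m (\<rho> x) f))"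
proof -
  have "ip m g (mv m (mix m \<rho> p) f) = ip m g (\<lambda>i. \<Sum>x\<in>UNIV. of_real (p x) * mv m (\<rho> x) f i)"
    by (rule ip_cong) (auto simp: mv_mix)
  also have "\<dots> = (\<Sum>x\<in>UNIV. of_real (p x) * ip m g (mv m (\<rho> x) f))" by (rule ip_sum_right)
  finally show ?thesis .
qed

lemma re_mix: "Re (ip m f (mv m (mix m \<rho> p) f)) = (\<Sum>x\<in>UNIV. p x * Re (ip m f (mv m (\<rho> x) f)))"
  unfolding ip_mix by (simp only: Re_sum) simp

lemma herm_mix: "herm m (mix m \<rho> p)" unfolding herm_def
proof (intro allI impI)
  fix i j assume i: "i < m" and j: "j < m"
  have "\<rho> x $$ (i,j) = cnj (\<rho> x $$ (j,i))" for x using rho_h[of x] i j unfolding herm_def by blast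
  thus "mix m \<rho> p $$ (i,j) = cnj (mix m \<rho> p $$ (j,i))"
    using i j by (simp add: mix_ent)
qed

lemma psd_mix: "(\<And>x. 0 \<le> p x) \<Longrightarrow> psd m (mix m \<rho> p)"
  unfolding psd_def re_mix using rho_p unfolding psd_def by (simp add: sum_nonneg)

end

lemma simplex_le1': "p \<in> simplex \<Longrightarrow> 0 \<le> p x \<and> p x \<le> (1::real)"
proof -
  assume p: "p \<in> simplex"
  hence p0: "\<And>y. 0 \<le> p y" and s: "(\<Sum>y\<in>UNIV. p y) = 1" unfolding simplex_def by auto
  have "p x \<le> (\<Sum>y\<in>UNIV. p y)" by (rule member_le_sum) (auto simp: p0)
  thus ?thesis using p0 s by simp
qed

lemma exists_max:
  fixes \<rho> :: "'n::finite \<Rightarrow> complex mat" and s :: "'n \<Rightarrow> real"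
  assumes dens: "\<forall>x. density m (\<rho> x)" and s0: "\<forall>x. 0 \<le> s x" and lam: "0 \<le> lam"
  defines "g \<equiv> \<lambda>p. vn_entropy (mix m \<rho> p) - (\<Sum>x\<in>UNIV. p x * vn_entropy (\<rho> x)) - lam * (\<Sum>x\<in>UNIV. s x * p x)"
  shows "\<exists>p. p \<in> simplex \<and> (\<forall>q\<in>simplex. g q \<le> g p)"
proof -
  define HX where "HX = (\<lambda>x. vn_entropy (\<rho> x))"
  have gd: "g q = vn_entropy (mix m \<rho> q) - (\<Sum>x\<in>UNIV. q x * HX x) - lam * (\<Sum>x\<in>UNIV. s x * q x)" for q
    unfolding g_def HX_def by simp
  note mc = mix_c[OF dens] and hm = herm_mix[OF dens] and pm = psd_mix[OF dens]
  have sp0: "\<And>x. 0 \<le> p x" if "p \<in> simplex" for p using that unfolding simplex_def by simp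
  define p0 :: "'n \<Rightarrow> real" where "p0 = (\<lambda>x. if x = undefined then 1 else 0)"
  have p0: "p0 \<in> simplex" unfolding simplex_def p0_def by simp
  define M where "M = real m + (\<Sum>x\<in>UNIV. \<bar>HX x\<bar>)"
  have bound: "g q \<le> M" if q: "q \<in> simplex" for q
  proof -
    obtain u d where es: "eigsys m (mix m \<rho> q) u d" using spectral[OF mc hm] by blast
    have "vn_entropy (mix m \<rho> q) = (\<Sum>k<m. eta (d k))" by (rule vn_ent[OF mc es])
    also have "\<dots> \<le> (\<Sum>k<m. 1)"
      by (intro sum_mono eta_le_one eig_nonneg[OF es pm]) (use sp0[OF q] in auto)
    finally have h1: "vn_entropy (mix m \<rho> q) \<le> real m" by simp
    have h2: "- (\<Sum>x\<in>UNIV. q x * HX x) \<le> (\<Sum>x\<in>UNIV. \<bar>HX x\<bar>)"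
    proof -
      have "- (\<Sum>x\<in>UNIV. q x * HX x) = (\<Sum>x\<in>UNIV. - (q x * HX x))" by (simp add: sum_negf)
      also have "\<dots> \<le> (\<Sum>x\<in>UNIV. \<bar>HX x\<bar>)"
      proof (rule sum_mono)
        fix x
        have "0 \<le> q x" "q x \<le> 1" using simplex_le1'[OF q] by auto
        hence "\<bar>q x * HX x\<bar> \<le> \<bar>HX x\<bar>" by (simp add: abs_mult mult_left_le_one_le)
        thus "- (q x * HX x) \<le> \<bar>HX x\<bar>" by linarith
      qed
      finally show ?thesis .
    qed
    have h3: "0 \<le> lam * (\<Sum>x\<in>UNIV. s x * q x)" using lam s0 sp0[OF q] by (simp add: sum_nonneg)
    show ?thesis unfolding gd M_def using h1 h2 h3 by linarith
  qed
  define S where "S = Sup (g ` simplex)"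
  have ne: "g ` simplex \<noteq> {}" using p0 by blast
  have bdd: "bdd_above (g ` simplex)" by (rule bdd_aboveI2[of _ _ M]) (rule bound)
  have "\<forall>n. \<exists>q. q \<in> simplex \<and> S - inverse (real (Suc n)) < g q"
  proof
    fix n
    have "S - inverse (real (Suc n)) < S" by simp
    then obtain y where "y \<in> g ` simplex" "S - inverse (real (Suc n)) < y"
      unfolding S_def using less_cSup_iff[OF ne bdd] by blast
    thus "\<exists>q. q \<in> simplex \<and> S - inverse (real (Suc n)) < g q" by blast
  qed
  then obtain Q where Q: "\<And>n. Q n \<in> simplex" and QS: "\<And>n. S - inverse (real (Suc n)) < g (Q n)"
    by metis
  obtain r where r: "strict_mono r" and cv: "\<forall>x\<in>UNIV. convergent (\<lambda>n. Q (r n) x)"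
    using finite_BW[of UNIV Q] simplex_le1'[OF Q] by fastforce
  define p where "p = (\<lambda>x. lim (\<lambda>n. Q (r n) x))"
  have conv: "(\<lambda>n. Q (r n) x) \<longlonglongrightarrow> p x" for x
    using cv unfolding p_def convergent_LIMSEQ_iff by blast
  have pp0: "0 \<le> p x" for x
    by (rule LIMSEQ_le_const[OF conv]) (use sp0[OF Q] in auto)
  have "(\<lambda>n. \<Sum>x\<in>UNIV. Q (r n) x) \<longlonglongrightarrow> (\<Sum>x\<in>UNIV. p x)"
    by (intro tendsto_sum conv)
  moreover have "(\<lambda>n. \<Sum>x\<in>UNIV. Q (r n) x) = (\<lambda>n. 1)" using Q unfolding simplex_def by simp
  ultimately have "(\<Sum>x\<in>UNIV. p x) = 1" using LIMSEQ_unique tendsto_const by metis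
  hence p: "p \<in> simplex" unfolding simplex_def using pp0 by simp
  obtain e l where esp: "eigsys m (mix m \<rho> p) e l" using spectral[OF mc hm] by blast
  have oe: "orthonormal m e" using esp unfolding eigsys_def by simp
  define a where "a = (\<lambda>k x. Re (ip m (e k) (mv m (\<rho> x) (e k))))"
  have a0: "0 \<le> a k x" for k x using rho_p[OF dens] unfolding a_def psd_def by simp
  define F where "F = (\<lambda>q. (\<Sum>k<m. eta (\<Sum>x\<in>UNIV. q x * a k x)) - (\<Sum>x\<in>UNIV. q x * HX x) - lam * (\<Sum>x\<in>UNIV. s x * q x))"
  have gF: "g q \<le> F q" if q: "q \<in> simplex" for q
  proof -
    have "vn_entropy (mix m \<rho> q) \<le> (\<Sum>k<m. eta (Re (ip m (e k) (mv m (mix m \<rho> q) (e k)))))"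
      by (rule ent_upper[OF mc hm _ oe]) (rule pm, use sp0[OF q] in auto)
    also have "\<dots> = (\<Sum>k<m. eta (\<Sum>x\<in>UNIV. q x * a k x))"
      unfolding a_def by (simp add: re_mix[OF dens])
    finally show ?thesis unfolding gd F_def by simp
  qed
  have gFp: "g p = F p"
  proof -
    have "vn_entropy (mix m \<rho> p) = (\<Sum>k<m. eta (Re (ip m (e k) (mv m (mix m \<rho> p) (e k)))))"
      by (rule ent_eig[OF mc esp])
    also have "\<dots> = (\<Sum>k<m. eta (\<Sum>x\<in>UNIV. p x * a k x))"
      unfolding a_def by (simp add: re_mix[OF dens])
    finally show ?thesis unfolding gd F_def by simp
  qed
  have FL: "(\<lambda>n. F (Q (r n))) \<longlonglongrightarrow> F p"
  proof -
    have e1: "(\<lambda>n. eta (\<Sum>x\<in>UNIV. Q (r n) x * a k x)) \<longlonglongrightarrow> eta (\<Sum>x\<in>UNIV. p x * a k x)" for k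
    proof (rule eta_tendsto)
      show "0 \<le> (\<Sum>x\<in>UNIV. Q (r n) x * a k x)" for n using sp0[OF Q] a0 by (simp add: sum_nonneg)
      show "(\<lambda>n. \<Sum>x\<in>UNIV. Q (r n) x * a k x) \<longlonglongrightarrow> (\<Sum>x\<in>UNIV. p x * a k x)"
        by (intro tendsto_sum tendsto_mult conv tendsto_const)
    qed
    have "(\<lambda>n. (\<Sum>k<m. eta (\<Sum>x\<in>UNIV. Q (r n) x * a k x)) - (\<Sum>x\<in>UNIV. Q (r n) x * HX x) - lam * (\<Sum>x\<in>UNIV. s x * Q (r n) x))
          \<longlonglongrightarrow> (\<Sum>k<m. eta (\<Sum>x\<in>UNIV. p x * a k x)) - (\<Sum>x\<in>UNIV. p x * HX x) - lam * (\<Sum>x\<in>UNIV. s x * p x)"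
      by (intro tendsto_diff tendsto_sum e1 tendsto_mult conv tendsto_const)
    thus ?thesis unfolding F_def .
  qed
  have XL: "(\<lambda>n. S - inverse (real (Suc n))) \<longlonglongrightarrow> S - 0"
    by (intro tendsto_diff tendsto_const LIMSEQ_inverse_real_of_nat)
  have XF: "\<forall>n\<ge>0. S - inverse (real (Suc n)) \<le> F (Q (r n))"
  proof (intro allI impI)
    fix n :: nat
    have "n \<le> r n" using seq_suble[OF r] .
    hence "inverse (real (Suc (r n))) \<le> inverse (real (Suc n))" by (simp add: le_imp_inverse_le)
    hence "S - inverse (real (Suc n)) \<le> S - inverse (real (Suc (r n)))" by simp
    also have "\<dots> < g (Q (r n))" by (rule QS)
    also have "\<dots> \<le> F (Q (r n))" by (rule gF[OF Q])
    finally show "S - inverse (real (Suc n)) \<le> F (Q (r n))" by simp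
  qed
  have "S - 0 \<le> F p" by (rule LIMSEQ_le[OF XL FL]) (use XF in blast)
  hence Sg: "S \<le> g p" using gFp by simp
  have "\<forall>q\<in>simplex. g q \<le> g p"
  proof
    fix q :: "'n \<Rightarrow> real" assume q: "q \<in> simplex"
    have "g q \<le> S" unfolding S_def by (rule cSup_upper) (use q bdd in auto)
    thus "g q \<le> g p" using Sg by simp
  qed
  thus ?thesis using p by blast
qed

lemma simplex_le1: "p \<in> simplex \<Longrightarrow> 0 \<le> p x \<and> p x \<le> (1::real)"
proof -
  assume p: "p \<in> simplex"
  hence p0: "\<And>y. 0 \<le> p y" and s: "(\<Sum>y\<in>UNIV. p y) = 1" unfolding simplex_def by auto
  have "p x \<le> (\<Sum>y\<in>UNIV. p y)" by (rule member_le_sum) (auto simp: p0)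
  thus ?thesis using p0 s by simp
qed

lemma simplex_comb:
  assumes "p \<in> simplex" "q \<in> simplex" "0 \<le> t" "t \<le> (1::real)"
  shows "(\<lambda>x. t * p x + (1 - t) * q x) \<in> simplex"
  using assms unfolding simplex_def by (simp add: sum.distrib sum_distrib_left[symmetric])

theorem theorem5:
  fixes \<rho> :: "'n::finite \<Rightarrow> complex mat" and m :: nat and s :: "'n \<Rightarrow> real"
  assumes dens: "\<forall>x. density m (\<rho> x)"
    and s_nonneg: "\<forall>x. 0 \<le> s x"
    and lin_indep: "\<forall>c :: 'n \<Rightarrow> real. mix m \<rho> c = 0\<^sub>m m m \<longrightarrow> c = (\<lambda>x. 0)"
  shows "\<forall>lam :: real. 0 \<le> lam \<longrightarrow>
           strict_concave_on simplex (\<lambda>p. holevo m \<rho> p - lam * (\<Sum>x\<in>UNIV. s x * p x)) \<and>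
           (\<exists>!p. p \<in> simplex \<and>
              (\<forall>q\<in>simplex. holevo m \<rho> q - lam * (\<Sum>x\<in>UNIV. s x * q x)
                            \<le> holevo m \<rho> p - lam * (\<Sum>x\<in>UNIV. s x * p x)))"
proof (intro allI impI)
  fix lam :: real assume lam: "0 \<le> lam"
  define g where "g = (\<lambda>p. holevo m \<rho> p - lam * (\<Sum>x\<in>UNIV. s x * p x))"
  define HX where "HX = (\<lambda>x. vn_entropy (\<rho> x))"
  have g_def': "g p = vn_entropy (mix m \<rho> p) - (\<Sum>x\<in>UNIV. p x * HX x) - lam * (\<Sum>x\<in>UNIV. s x * p x)" for p
    unfolding g_def holevo_def HX_def by simp
  note mc = mix_c[OF dens] and hm = herm_mix[OF dens] and pm = psd_mix[OF dens]
  have sp0: "\<And>x. 0 \<le> p x" if "p \<in> simplex" for p using that unfolding simplex_def by simp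
  have sc: "strict_concave_on simplex g" unfolding strict_concave_on_def
  proof (intro ballI impI allI)
    fix p q :: "'n \<Rightarrow> real" and t :: real
    assume p: "p \<in> simplex" and q: "q \<in> simplex" and pq: "p \<noteq> q" and t: "0 < t \<and> t < 1"
    define r where "r = (\<lambda>x. t * p x + (1 - t) * q x)"
    have neq: "\<exists>i<m. \<exists>j<m. mix m \<rho> p $$ (i,j) \<noteq> mix m \<rho> q $$ (i,j)"
    proof (rule ccontr)
      assume "\<not> ?thesis"
      hence eq: "\<And>i j. i < m \<Longrightarrow> j < m \<Longrightarrow> mix m \<rho> p $$ (i,j) = mix m \<rho> q $$ (i,j)" by blast
      have "mix m \<rho> (\<lambda>x. p x - q x) = 0\<^sub>m m m"
      proof (rule eq_matI)
        fix i j assume i: "i < dim_row (0\<^sub>m m m :: complex mat)" and j: "j < dim_col (0\<^sub>m m m :: complex mat)"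
        hence i: "i < m" and j: "j < m" by auto
        have "mix m \<rho> (\<lambda>x. p x - q x) $$ (i,j) = mix m \<rho> p $$ (i,j) - mix m \<rho> q $$ (i,j)"
          using i j by (simp add: mix_ent[OF dens] sum_subtractf algebra_simps)
        thus "mix m \<rho> (\<lambda>x. p x - q x) $$ (i,j) = 0\<^sub>m m m $$ (i,j)" using eq[OF i j] i j by simp
      qed (auto simp: mix_def)
      hence "(\<lambda>x. p x - q x) = (\<lambda>x. 0)" using lin_indep by blast
      hence "p = q" by (auto simp: fun_eq_iff dest: fun_cong)
      thus False using pq by simp
    qed
    have Ceq: "\<forall>i<m. \<forall>j<m. mix m \<rho> r $$ (i,j) = of_real t * mix m \<rho> p $$ (i,j) + of_real (1 - t) * mix m \<rho> q $$ (i,j)"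
    proof (intro allI impI)
      fix i j assume i: "i < m" and j: "j < m"
      have "mix m \<rho> r $$ (i,j) = (\<Sum>x\<in>UNIV. of_real t * (of_real (p x) * \<rho> x $$ (i,j)) + of_real (1 - t) * (of_real (q x) * \<rho> x $$ (i,j)))"
        unfolding mix_ent[OF dens i j] r_def by (intro sum.cong refl) (simp add: algebra_simps)
      also have "\<dots> = of_real t * mix m \<rho> p $$ (i,j) + of_real (1 - t) * mix m \<rho> q $$ (i,j)"
        unfolding mix_ent[OF dens i j] by (simp only: sum.distrib sum_distrib_left)
      finally show "mix m \<rho> r $$ (i,j) = of_real t * mix m \<rho> p $$ (i,j) + of_real (1 - t) * mix m \<rho> q $$ (i,j)" .
    qed
    have key: "t * vn_entropy (mix m \<rho> p) + (1 - t) * vn_entropy (mix m \<rho> q) < vn_entropy (mix m \<rho> r)"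
      by (rule ent_strict[OF mc mc mc hm hm pm pm _ _ Ceq neq]) (use sp0[OF p] sp0[OF q] t in auto)
    have "(\<Sum>x\<in>UNIV. r x * HX x) = (\<Sum>x\<in>UNIV. t * (p x * HX x) + (1 - t) * (q x * HX x))"
      unfolding r_def by (intro sum.cong refl) (simp add: algebra_simps)
    hence L1: "(\<Sum>x\<in>UNIV. r x * HX x) = t * (\<Sum>x\<in>UNIV. p x * HX x) + (1 - t) * (\<Sum>x\<in>UNIV. q x * HX x)"
      by (simp only: sum.distrib sum_distrib_left)
    have "(\<Sum>x\<in>UNIV. s x * r x) = (\<Sum>x\<in>UNIV. t * (s x * p x) + (1 - t) * (s x * q x))"
      unfolding r_def by (intro sum.cong refl) (simp add: algebra_simps)
    hence L2: "(\<Sum>x\<in>UNIV. s x * r x) = t * (\<Sum>x\<in>UNIV. s x * p x) + (1 - t) * (\<Sum>x\<in>UNIV. s x * q x)"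
      by (simp only: sum.distrib sum_distrib_left)
    have "g r - (t * g p + (1 - t) * g q) =
          vn_entropy (mix m \<rho> r) - (t * vn_entropy (mix m \<rho> p) + (1 - t) * vn_entropy (mix m \<rho> q))"
      unfolding g_def' L1 L2 by (simp add: algebra_simps)
    thus "t * g p + (1 - t) * g q < g (\<lambda>x. t * p x + (1 - t) * q x)" using key unfolding r_def by simp
  qed
  have uniq: "p1 = p2" if p1: "p1 \<in> simplex \<and> (\<forall>q\<in>simplex. g q \<le> g p1)"
    and p2: "p2 \<in> simplex \<and> (\<forall>q\<in>simplex. g q \<le> g p2)" for p1 p2
  proof (rule ccontr)
    assume ne: "p1 \<noteq> p2"
    define r where "r = (\<lambda>x. (1/2) * p1 x + (1 - 1/2) * p2 x)"
    have r: "r \<in> simplex" unfolding r_def by (rule simplex_comb) (use p1 p2 in auto)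
    have "(1/2) * g p1 + (1 - 1/2) * g p2 < g r"
      unfolding r_def by (rule sc[unfolded strict_concave_on_def, rule_format]) (use p1 p2 ne in auto)
    moreover have "g r \<le> g p1" "g r \<le> g p2" using p1 p2 r by auto
    ultimately show False by simp
  qed
  have ex: "\<exists>p. p \<in> simplex \<and> (\<forall>q\<in>simplex. g q \<le> g p)"
    using exists_max[OF dens s_nonneg lam] by (simp add: g_def' HX_def)
  show "strict_concave_on simplex (\<lambda>p. holevo m \<rho> p - lam * (\<Sum>x\<in>UNIV. s x * p x)) \<and>
        (\<exists>!p. p \<in> simplex \<and> (\<forall>q\<in>simplex. holevo m \<rho> q - lam * (\<Sum>x\<in>UNIV. s x * q x)
                            \<le> holevo m \<rho> p - lam * (\<Sum>x\<in>UNIV. s x * p x)))"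
  proof -
    have E1: "\<exists>!p. p \<in> simplex \<and> (\<forall>q\<in>simplex. g q \<le> g p)"
      by (rule ex_ex1I[OF ex]) (rule uniq)
    show ?thesis using sc E1 unfolding g_def by simp
  qed
qed

end
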